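(* Under the setup in the context, let $H_n\equiv(n\hat\sigma_{2sls}^2)^{-1}(\hat\beta_{ols}-\hat\beta_{2sls})^\top(Y_1^\top M_{Z_1}Y_1)(\hat\beta_{ols}-\hat\beta_{2sls})$. Then \[ \hat\sigma_u^2=\hat\sigma_{ols}^2\Big(1-\frac{t_{H_1}}{n}\Big)=\hat\sigma_{2sls}^2\Big(1-\frac{t_{H_2}}{n}-H_n\Big). \]
   Context: Data: $Y_1$ is an $n\times k_1$ matrix, $Y_2$ an $n\times 1$ vector, $Z_1$ an $n\times p_1$ matrix, $Z_2$ an $n\times p_2$ matrix, all real; $Z\equiv(Z_1,Z_2)$ and $X\equiv(Y_1,Z_1)$. For a matrix $A$ with $A^\top A$ nonsingular, $P_A\equiv A(A^\top A)^{-1}A^\top$ and $M_A\equiv I_n-P_A$. Standing assumptions: $Z^\top Z$, $X^\top X$, $X^\top P_Z X$ and $(X,\hat V)^\top(X,\hat V)$ are nonsingular, where $\hat V\equiv M_Z Y_1$. Define $\hat Y_1\equiv P_Z Y_1$, $\hat\theta_{ols}\equiv(X^\top X)^{-1}X^\top Y_2$, $\hat\theta_{2sls}\equiv(X^\top P_ZX)^{-1}X^\top P_Z Y_2$, and let $\hat\beta_{ols},\hat\beta_{2sls}$ be the leading $k_1\times1$ subvectors of $\hat\theta_{ols},\hat\theta_{2sls}$. Define $(\hat\theta_{cf}^\top,\hat\rho_{cf}^\top)^\top\equiv((X,\hat V)^\top(X,\hat V))^{-1}(X,\hat V)^\top Y_2$, $\hat\sigma_u^2\equiv n^{-1}\|Y_2-X\hat\theta_{cf}-\hat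 V\hat\rho_{cf}\|^2$, $\hat\sigma_{ols}^2\equiv n^{-1}\|Y_2-X\hat\theta_{ols}\|^2$, $\hat\sigma_{2sls}^2\equiv n^{-1}\|Y_2-X\hat\theta_{2sls}\|^2$; these three are assumed strictly positive. For scalars $s_1^2,s_2^2>0$ such that the matrix below is nonsingular, $t_{H,n}(s_1^2,s_2^2)\equiv(\hat\beta_{ols}-\hat\beta_{2sls})^\top\big(s_1^2(\hat Y_1^\top M_{Z_1}\hat Y_1)^{-1}-s_2^2(Y_1^\top M_{Z_1}Y_1)^{-1}\big)^{-1}(\hat\beta_{ols}-\hat\beta_{2sls})$, and $t_{H_1}\equiv t_{H,n}(\hat\sigma_{ols}^2,\hat\sigma_{ols}^2)$, $t_{H_2}\equiv t_{H,n}(\hat\sigma_{2sls}^2,\hat\sigma_{2sls}^2)$. *)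

theory Defs
  imports "HOL-Analysis.Analysis"
begin

text \<open>Matrices are rendered as \<open>real^'c^'r\<close> (rows indexed by 'r, columns by 'c).
  Horizontal concatenation (A, B) is indexed by the sum type of column indices.\<close>

definition hcat :: "real^('m::finite)^'r \<Rightarrow> real^'k^'r \<Rightarrow> real^('m + 'k)^'r" where
  "hcat A B = (\<chi> i j. case j of Inl a \<Rightarrow> A $ i $ a | Inr b \<Rightarrow> B $ i $ b)"

definition projm :: "real^'c^'r \<Rightarrow> real^'r^'r" where
  "projm A = A ** matrix_inv (transpose A ** A) ** transpose A"

definition annih :: "real^'c^'r \<Rightarrow> real^'r^'r" where
  "annih A = mat 1 - projm A"

definition lsq :: "real^'c^'r \<Rightarrow> real^'r \<Rightarrow> real^'c" where
  "lsq A y = matrix_inv (transpose A ** A) *v (transpose A *v y)"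

definition tsls :: "real^'w^'r \<Rightarrow> real^'c^'r \<Rightarrow> real^'r \<Rightarrow> real^'c" where
  "tsls Z X y = matrix_inv (transpose X ** projm Z ** X) *v (transpose X *v (projm Z *v y))"

definition lead :: "real^('k::finite + 'p::finite) \<Rightarrow> real^'k" where
  "lead v = (\<chi> i. v $ Inl i)"

definition tHn :: "real^'k^'r \<Rightarrow> real^'p^'r \<Rightarrow> real^'w^'r \<Rightarrow> real^'k \<Rightarrow> real^'k
                   \<Rightarrow> real \<Rightarrow> real \<Rightarrow> real" where
  "tHn Y1 Z1 Z bols b2 s1 s2 =
     (let d = bols - b2; Yh = projm Z ** Y1;
          A = transpose Yh ** annih Z1 ** Yh; B = transpose Y1 ** annih Z1 ** Y1
      in d \<bullet> (matrix_inv (s1 *\<^sub>R matrix_inv A - s2 *\<^sub>R matrix_inv B) *v d))"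

definition tHmat :: "real^'k^'r \<Rightarrow> real^'p^'r \<Rightarrow> real^'w^'r \<Rightarrow> real \<Rightarrow> real \<Rightarrow> real^'k^'k" where
  "tHmat Y1 Z1 Z s1 s2 =
     (let Yh = projm Z ** Y1;
          A = transpose Yh ** annih Z1 ** Yh; B = transpose Y1 ** annih Z1 ** Y1
      in s1 *\<^sub>R matrix_inv A - s2 *\<^sub>R matrix_inv B)"

end

theory Submission
  imports Defs
begin

declare transpose_matrix_vector[simp del] vector_transpose_matrix[simp del]

lemma mm_sub_l: "(A::real^'b^'a) ** (B - C) = A ** B - A ** C"
  by (simp add: matrix_matrix_mult_def vec_eq_iff sum_subtractf right_diff_distrib)
lemma mm_sub_r: "((A::real^'b^'a) - B) ** C = A ** C - B ** C"
  by (simp add: matrix_matrix_mult_def vec_eq_iff sum_subtractf left_diff_distrib)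
lemma mm_add_r: "((A::real^'b^'a) + B) ** C = A ** C + B ** C"
  by (simp add: matrix_matrix_mult_def vec_eq_iff sum.distrib distrib_right)

lemma dotT: "inner (transpose A *v y) x = inner y ((A::real^'c^'r) *v x)"
  by (simp add: transpose_matrix_vector dot_lmul_matrix)

lemma transpose_diff: "transpose ((A::real^'c^'r) - B) = transpose A - transpose B"
  by (simp add: transpose_def vec_eq_iff)

lemma minv:
  fixes A :: "real^'n^'m"
  assumes "invertible A"
  shows "A ** matrix_inv A = mat 1" "matrix_inv A ** A = mat 1"
proof -
  obtain B where "A ** B = mat 1 \<and> B ** A = mat 1" using assms unfolding invertible_def by blast
  then have "A ** matrix_inv A = mat 1 \<and> matrix_inv A ** A = mat 1"
    unfolding matrix_inv_def by (rule someI)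
  then show "A ** matrix_inv A = mat 1" "matrix_inv A ** A = mat 1" by auto
qed

lemma minv_unique:
  fixes A :: "real^'n^'m"
  assumes "invertible A" "B ** A = mat 1"
  shows "matrix_inv A = B"
proof -
  have "matrix_inv A = (B ** A) ** matrix_inv A" using assms by simp
  also have "\<dots> = B" by (simp add: matrix_mul_assoc[symmetric] minv[OF assms(1)])
  finally show ?thesis .
qed

lemma minv_sym:
  fixes G :: "real^'n^'n"
  assumes "invertible G" "transpose G = G"
  shows "transpose (matrix_inv G) = matrix_inv G"
proof -
  have "transpose (matrix_inv G) ** G = transpose (matrix_inv G) ** transpose G"
    using assms(2) by simp
  also have "\<dots> = transpose (G ** matrix_inv G)" by (simp only: matrix_transpose_mul)
  also have "\<dots> = mat 1" by (simp only: minv(1)[OF assms(1)] transpose_mat)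
  finally have "transpose (matrix_inv G) ** G = mat 1" .
  then show ?thesis using minv_unique[OF assms(1)] by metis
qed

lemma inv_ker:
  fixes G :: "real^'a^'a"
  shows "invertible G \<longleftrightarrow> (\<forall>x. G *v x = 0 \<longrightarrow> x = 0)"
  by (simp add: invertible_left_inverse matrix_left_invertible_ker)

lemma inv_inj:
  fixes G :: "real^'a^'a"
  assumes "invertible G" "G *v x = 0" shows "x = 0"
  using assms inv_ker by blast

lemma gram_sym: "transpose (transpose (A::real^'c^'r) ** A) = transpose A ** A"
  by (simp add: matrix_transpose_mul)

lemma gram_ker:
  fixes A :: "real^'c^'r"
  assumes "(transpose A ** A) *v x = 0" shows "A *v x = 0"
proof -
  have "transpose A *v (A *v x) = 0" using assms by (simp only: matrix_vector_mul_assoc)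
  then have "inner (transpose A *v (A *v x)) x = 0" by simp
  then have "inner (A *v x) (A *v x) = 0" by (simp only: dotT)
  then show ?thesis by simp
qed

lemma gram_inv_iff:
  fixes A :: "real^'c^'r"
  shows "invertible (transpose A ** A) \<longleftrightarrow> (\<forall>x. A *v x = 0 \<longrightarrow> x = 0)"
  unfolding inv_ker
  by (metis gram_ker matrix_vector_mul_assoc matrix_vector_mult_0_right)

lemma projm_A:
  fixes A :: "real^'c^'r"
  assumes "invertible (transpose A ** A)"
  shows "projm A ** A = A"
proof -
  have "projm A ** A = A ** (matrix_inv (transpose A ** A) ** (transpose A ** A))"
    unfolding projm_def by (simp add: matrix_mul_assoc)
  then show ?thesis by (simp add: minv[OF assms])
qed

lemma projm_sym:
  fixes A :: "real^'c^'r"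
  assumes "invertible (transpose A ** A)"
  shows "transpose (projm A) = projm A"
  unfolding projm_def
  by (simp add: matrix_transpose_mul minv_sym[OF assms gram_sym] matrix_mul_assoc)

lemma projm_idem:
  fixes A :: "real^'c^'r"
  assumes "invertible (transpose A ** A)"
  shows "projm A ** projm A = projm A"
proof -
  have "projm A ** projm A = (projm A ** A) ** matrix_inv (transpose A ** A) ** transpose A"
    unfolding projm_def[of A] by (simp add: matrix_mul_assoc)
  then show ?thesis unfolding projm_A[OF assms] by (simp add: projm_def)
qed

lemma annih_A:
  fixes A :: "real^'c^'r"
  assumes "invertible (transpose A ** A)"
  shows "annih A ** A = 0"
  unfolding annih_def by (simp add: mm_sub_r projm_A[OF assms])

lemma annih_sym:
  fixes A :: "real^'c^'r"
  assumes "invertible (transpose A ** A)"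
  shows "transpose (annih A) = annih A"
  unfolding annih_def by (simp add: transpose_diff projm_sym[OF assms])

lemma annih_idem:
  fixes A :: "real^'c^'r"
  assumes "invertible (transpose A ** A)"
  shows "annih A ** annih A = annih A"
  unfolding annih_def by (simp add: mm_sub_r mm_sub_l projm_idem[OF assms])

lemma lsq_normal:
  fixes A :: "real^'c^'r"
  assumes "invertible (transpose A ** A)"
  shows "transpose A *v (y - A *v lsq A y) = 0"
proof -
  have "transpose A *v (A *v lsq A y) = ((transpose A ** A) ** matrix_inv (transpose A ** A)) *v (transpose A *v y)"
    unfolding lsq_def by (simp add: matrix_vector_mul_assoc matrix_mul_assoc)
  then show ?thesis by (simp add: minv[OF assms] matrix_vector_mult_diff_distrib)
qed

lemma tsls_normal:
  fixes X :: "real^'c^'r" and Z :: "real^'w^'r"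
  assumes "invertible (transpose X ** projm Z ** X)"
  shows "transpose X *v (projm Z *v (y - X *v tsls Z X y)) = 0"
proof -
  have "transpose X *v (projm Z *v (X *v tsls Z X y)) =
     ((transpose X ** projm Z ** X) ** matrix_inv (transpose X ** projm Z ** X)) *v (transpose X *v (projm Z *v y))"
    unfolding tsls_def by (simp add: matrix_vector_mul_assoc matrix_mul_assoc)
  then show ?thesis by (simp add: minv[OF assms] matrix_vector_mult_diff_distrib)
qed

lemma hcat_mv:
  "hcat A B *v x = A *v (\<chi> i. x $ Inl i) + B *v (\<chi> i. x $ Inr i)"
  unfolding hcat_def matrix_vector_mult_def
  by (simp add: vec_eq_iff UNIV_Plus_UNIV[symmetric] sum.Plus del: UNIV_Plus_UNIV)

lemma hcat_T_l: "(transpose (hcat A B) *v y) $ Inl a = (transpose A *v y) $ a"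
  unfolding hcat_def matrix_vector_mult_def transpose_def by simp
lemma hcat_T_r: "(transpose (hcat A B) *v y) $ Inr a = (transpose B *v y) $ a"
  unfolding hcat_def matrix_vector_mult_def transpose_def by simp
lemma hcat_T:
  "(transpose (hcat A B) *v y = 0) \<longleftrightarrow> (transpose A *v y = 0 \<and> transpose B *v y = 0)"
proof
  assume h: "transpose (hcat A B) *v y = 0"
  show "transpose A *v y = 0 \<and> transpose B *v y = 0"
    unfolding vec_eq_iff using h hcat_T_l[of A B y] hcat_T_r[of A B y] by (metis zero_index)
next
  assume h: "transpose A *v y = 0 \<and> transpose B *v y = 0"
  show "transpose (hcat A B) *v y = 0"
    unfolding vec_eq_iff
  proof
    fix j show "(transpose (hcat A B) *v y) $ j = 0 $ j"
      using h by (cases j) (simp_all only: hcat_T_l hcat_T_r zero_index)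
  qed
qed

lemma hcat_mm: "M ** hcat A B = hcat (M ** A) (M ** B)"
  unfolding hcat_def matrix_matrix_mult_def
  by (simp add: vec_eq_iff split: sum.splits)

lemma hcat_l:
  "A *v x = hcat A B *v (\<chi> j. case j of Inl a \<Rightarrow> x $ a | Inr b \<Rightarrow> 0)"
proof -
  have "(\<chi> i. (\<chi> j. case j of Inl a \<Rightarrow> x $ a | Inr b \<Rightarrow> (0::real)) $ Inl i) = x"
    by (simp add: vec_eq_iff)
  then show ?thesis by (simp add: hcat_mv flip: zero_vec_def)
qed

lemma gram_l:
  fixes A :: "real^'a^'n" and B :: "real^'b^'n"
  assumes "invertible (transpose (hcat A B) ** hcat A B)"
  shows "invertible (transpose A ** A)"
  unfolding gram_inv_iff
proof (intro allI impI)
  fix x assume h: "A *v x = 0"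
  let ?e = "(\<chi> j. case j of Inl a \<Rightarrow> x $ a | Inr b \<Rightarrow> (0::real)) :: real^('a+'b)"
  have "hcat A B *v ?e = 0" using h hcat_l[of A x B] by simp
  then have "?e = 0" using assms gram_inv_iff by blast
  then show "x = 0" by (simp add: vec_eq_iff) (metis sum.simps(5))
qed

lemma projm_l:
  fixes A :: "real^'a^'n" and B :: "real^'b^'n"
  assumes "invertible (transpose (hcat A B) ** hcat A B)"
  shows "projm (hcat A B) ** A = A"
  unfolding matrix_eq
proof
  fix x
  show "(projm (hcat A B) ** A) *v x = A *v x"
    by (metis hcat_l matrix_vector_mul_assoc projm_A[OF assms])
qed

lemma quadM:
  fixes Q :: "real^'k^'n" and E :: "real^'n^'n"
  assumes "transpose E = E" "E ** E = E"
  shows "inner v ((transpose Q ** E ** Q) *v v) = inner (E *v (Q *v v)) (E *v (Q *v v))"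
proof -
  have "(transpose Q ** E ** Q) *v v = transpose Q *v (E *v (Q *v v))"
    by (simp only: matrix_vector_mul_assoc matrix_mul_assoc)
  then have "inner v ((transpose Q ** E ** Q) *v v) = inner (transpose Q *v (E *v (Q *v v))) v"
    by (simp only: inner_commute)
  also have "\<dots> = inner (E *v (Q *v v)) (Q *v v)" by (rule dotT)
  also have "\<dots> = inner (transpose E *v (E *v (Q *v v))) (Q *v v)"
    using assms by (simp add: matrix_vector_mul_assoc matrix_mul_assoc)
  also have "\<dots> = inner (E *v (Q *v v)) (E *v (Q *v v))" by (simp add: dotT)
  finally show ?thesis .
qed

lemma qinv:
  fixes Q :: "real^'k^'n" and Z1 :: "real^'p^'n"
  assumes g: "invertible (transpose Z1 ** Z1)" and k: "\<forall>x. hcat Q Z1 *v x = 0 \<longrightarrow> x = 0"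
  shows "invertible (transpose Q ** annih Z1 ** Q)"
  unfolding inv_ker
proof (intro allI impI)
  fix v assume h: "(transpose Q ** annih Z1 ** Q) *v v = 0"
  define q where "q = Q *v v"
  have "inner (annih Z1 *v q) (annih Z1 *v q) = 0"
    using quadM[OF annih_sym[OF g] annih_idem[OF g], of v Q] h q_def by simp
  then have m0: "annih Z1 *v q = 0" by simp
  define w where "w = matrix_inv (transpose Z1 ** Z1) *v (transpose Z1 *v q)"
  have "projm Z1 *v q = Z1 *v w" unfolding w_def projm_def by (simp add: matrix_vector_mul_assoc matrix_mul_assoc)
  moreover have "annih Z1 *v q = q - projm Z1 *v q"
    unfolding annih_def by (simp add: matrix_vector_mult_diff_rdistrib)
  ultimately have qw: "q = Z1 *v w" using m0 by simp
  define x :: "real^('k+'p)" where "x = (\<chi> j. case j of Inl a \<Rightarrow> v $ a | Inr b \<Rightarrow> - (w $ b))"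
  have x1: "(\<chi> i. x $ Inl i) = v" and x2: "(\<chi> i. x $ Inr i) = - w"
    unfolding x_def by (simp_all add: vec_eq_iff)
  have neg: "Z1 *v (- w) = - (Z1 *v w)"
    by (metis diff_0 matrix_vector_mult_diff_distrib matrix_vector_mult_0_right)
  have "hcat Q Z1 *v x = 0" using qw q_def by (simp add: hcat_mv x1 x2 neg)
  then have "x = 0" using k by blast
  then show "v = 0" using x1 by (simp add: vec_eq_iff)
qed

lemma final_alg:
  fixes N s1 s2 su q b E0 U Ec :: real
  assumes "N > 0" "s1 > 0" "s2 > 0" "su = Ec / N" "s1 = E0 / N" "s2 = U / N"
    "U = E0 + b" "U = Ec + q + b"
  shows "su = s1 * (1 - (q / s1) / N) \<and> su = s2 * (1 - (q / s2) / N - b / (N * s2))"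
proof -
  have "s1 * (1 - (q / s1) / N) = s1 - q / N" using assms(1,2) by (simp add: field_simps)
  also have "\<dots> = (E0 - q) / N" using assms(5) by (simp add: diff_divide_distrib)
  also have "\<dots> = su" using assms(4,7,8) by simp
  finally have 1: "su = s1 * (1 - (q / s1) / N)" ..
  have "s2 * (1 - (q / s2) / N - b / (N * s2)) = s2 - q / N - b / N" using assms(1,3) by (simp add: field_simps)
  also have "\<dots> = (U - q - b) / N" using assms(6) by (simp add: diff_divide_distrib)
  also have "\<dots> = su" using assms(4,8) by simp
  finally have 2: "su = s2 * (1 - (q / s2) / N - b / (N * s2))" ..
  show ?thesis using 1 2 ..
qed

theorem lemma2:
  fixes Y1 :: "real^'k^'n" and Y2 :: "real^'n"
    and Z1 :: "real^'p^'n" and Z2 :: "real^'q^'n"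
  defines "Z \<equiv> hcat Z1 Z2"
    and "X \<equiv> hcat Y1 Z1"
  defines "Vh \<equiv> annih Z ** Y1"
  defines "th_ols \<equiv> lsq X Y2"
    and "th_2sls \<equiv> tsls Z X Y2"
    and "cf \<equiv> lsq (hcat X Vh) Y2"
  defines "b_ols \<equiv> lead th_ols"
    and "b_2sls \<equiv> lead th_2sls"
    and "th_cf \<equiv> (\<chi> i. cf $ Inl i)"
    and "rho_cf \<equiv> (\<chi> i. cf $ Inr i)"
  defines "s2u \<equiv> (norm (Y2 - X *v th_cf - Vh *v rho_cf))\<^sup>2 / real CARD('n)"
    and "s2ols \<equiv> (norm (Y2 - X *v th_ols))\<^sup>2 / real CARD('n)"
    and "s2tsls \<equiv> (norm (Y2 - X *v th_2sls))\<^sup>2 / real CARD('n)"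
  defines "tH1 \<equiv> tHn Y1 Z1 Z b_ols b_2sls s2ols s2ols"
    and "tH2 \<equiv> tHn Y1 Z1 Z b_ols b_2sls s2tsls s2tsls"
  defines "Hn \<equiv> (b_ols - b_2sls) \<bullet> ((transpose Y1 ** annih Z1 ** Y1) *v (b_ols - b_2sls))
                 / (real CARD('n) * s2tsls)"
  assumes "invertible (transpose Z ** Z)"
    and "invertible (transpose X ** X)"
    and "invertible (transpose X ** projm Z ** X)"
    and "invertible (transpose (hcat X Vh) ** hcat X Vh)"
    and "s2u > 0" and "s2ols > 0" and "s2tsls > 0"
    and "invertible (tHmat Y1 Z1 Z s2ols s2ols)"
    and "invertible (tHmat Y1 Z1 Z s2tsls s2tsls)"
  shows "s2u = s2ols * (1 - tH1 / real CARD('n))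
       \<and> s2u = s2tsls * (1 - tH2 / real CARD('n) - Hn)"
proof -
  note gZ = \<open>invertible (transpose Z ** Z)\<close>
  note gX = \<open>invertible (transpose X ** X)\<close>
  note gPX = \<open>invertible (transpose X ** projm Z ** X)\<close>
  note gW = \<open>invertible (transpose (hcat X Vh) ** hcat X Vh)\<close>
  define P where "P = projm Z"
  define M where "M = annih Z"
  define P1 where "P1 = projm Z1"
  define M1 where "M1 = annih Z1"
  have gZ1: "invertible (transpose Z1 ** Z1)" using gZ unfolding Z_def by (rule gram_l)
  have Psym: "transpose P = P" unfolding P_def using projm_sym[OF gZ] .
  have Pidem: "P ** P = P" unfolding P_def using projm_idem[OF gZ] .
  have Msym: "transpose M = M" unfolding M_def using annih_sym[OF gZ] .
  have Midem: "M ** M = M" unfolding M_def using annih_idem[OF gZ] .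
  have M1sym: "transpose M1 = M1" unfolding M1_def using annih_sym[OF gZ1] .
  have M1idem: "M1 ** M1 = M1" unfolding M1_def using annih_idem[OF gZ1] .
  have M1Z1: "M1 ** Z1 = 0" unfolding M1_def using annih_A[OF gZ1] .
  have M_eq: "M = mat 1 - P" unfolding M_def P_def annih_def ..
  have M1_eq: "M1 = mat 1 - P1" unfolding M1_def P1_def annih_def ..
  have PZ1: "P ** Z1 = Z1" unfolding P_def Z_def using projm_l[OF gZ[unfolded Z_def]] .
  have Z1P: "transpose Z1 ** P = transpose Z1"
  proof -
    have "transpose Z1 ** P = transpose (P ** Z1)" by (simp only: matrix_transpose_mul Psym)
    then show ?thesis by (simp only: PZ1)
  qed
  have MZ1: "M ** Z1 = 0" unfolding M_eq by (simp add: mm_sub_r PZ1)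
  have Z1M: "transpose Z1 ** M = 0"
  proof -
    have "transpose Z1 ** M = transpose (M ** Z1)" by (simp only: matrix_transpose_mul Msym)
    then show ?thesis by (simp add: MZ1 transpose_def vec_eq_iff)
  qed
  have PM: "P ** M = 0" unfolding M_eq by (simp add: mm_sub_l Pidem)
  have Vh_eq: "Vh = M ** Y1" unfolding Vh_def M_def ..
  have VhT: "transpose Vh = transpose Y1 ** M"
    unfolding Vh_eq by (simp add: matrix_transpose_mul Msym)

  define eo where "eo = Y2 - X *v th_ols"
  have N1: "transpose X *v eo = 0" unfolding eo_def th_ols_def using lsq_normal[OF gX] .
  then have Y1eo: "transpose Y1 *v eo = 0" and Z1eo: "transpose Z1 *v eo = 0"
    unfolding X_def hcat_T by auto
  define u where "u = Y2 - X *v th_2sls"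
  have N2: "transpose X *v (P *v u) = 0" unfolding u_def th_2sls_def P_def using tsls_normal[OF gPX] .
  then have Y1Pu: "transpose Y1 *v (P *v u) = 0" and Z1Pu: "transpose Z1 *v (P *v u) = 0"
    unfolding X_def hcat_T by auto
  have Z1u: "transpose Z1 *v u = 0"
    using Z1Pu by (simp add: matrix_vector_mul_assoc matrix_mul_assoc Z1P)
  define \<delta> where "\<delta> = th_ols - th_2sls"
  define d where "d = b_ols - b_2sls"
  define g where "g = (\<chi> i. \<delta> $ Inr i)"
  have d_eq: "d = (\<chi> i. \<delta> $ Inl i)"
    unfolding d_def b_ols_def b_2sls_def lead_def \<delta>_def by (simp add: vec_eq_iff)
  have Xd: "X *v \<delta> = u - eo"
    unfolding u_def eo_def \<delta>_def by (simp add: matrix_vector_mult_diff_distrib)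
  have Xd_split: "X *v \<delta> = Y1 *v d + Z1 *v g"
    unfolding X_def hcat_mv d_eq g_def ..
  have Z1Xd: "transpose Z1 *v (X *v \<delta>) = 0"
    unfolding Xd by (simp add: matrix_vector_mult_diff_distrib Z1u Z1eo)
  have P1Xd: "P1 *v (X *v \<delta>) = 0"
    unfolding P1_def projm_def by (simp add: matrix_vector_mul_assoc[symmetric] Z1Xd)
  have "M1 *v (X *v \<delta>) = X *v \<delta>"
    unfolding M1_eq by (simp add: matrix_vector_mult_diff_rdistrib P1Xd)
  then have XdM: "X *v \<delta> = M1 *v (Y1 *v d)"
    unfolding Xd_split by (simp add: matrix_vector_right_distrib matrix_vector_mul_assoc matrix_mul_assoc M1Z1)
  define B where "B = transpose Y1 ** M1 ** Y1"
  have Bsym: "transpose B = B"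
    unfolding B_def by (simp add: matrix_transpose_mul M1sym matrix_mul_assoc)
  have XdXd: "inner (X *v \<delta>) (X *v \<delta>) = inner d (B *v d)"
    unfolding B_def XdM using quadM[OF M1sym M1idem, of d Y1] by simp
  have cross1: "inner eo (X *v \<delta>) = 0"
    using dotT[of X eo \<delta>] N1 by simp
  have u_eq: "u = eo + X *v \<delta>" unfolding Xd by simp
  have E1: "(norm u)\<^sup>2 = (norm eo)\<^sup>2 + inner d (B *v d)"
    unfolding power2_norm_eq_inner u_eq
    by (simp add: inner_add_left inner_add_right cross1 inner_commute[of "X *v \<delta>" eo] XdXd)

  define W where "W = hcat X Vh"
  define r where "r = rho_cf"
  define e where "e = Y2 - X *v th_cf - Vh *v rho_cf"
  have Wcf: "W *v cf = X *v th_cf + Vh *v rho_cf"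
    unfolding W_def hcat_mv th_cf_def rho_cf_def ..
  have "transpose W *v (Y2 - W *v cf) = 0"
    unfolding W_def cf_def using lsq_normal[OF gW] .
  then have "transpose W *v e = 0" unfolding Wcf e_def by (simp add: algebra_simps)
  then have XTe: "transpose X *v e = 0" and VTe: "transpose Vh *v e = 0"
    unfolding W_def hcat_T by auto
  have "transpose Y1 *v (M *v e) = 0"
    using VTe by (simp add: VhT matrix_vector_mul_assoc matrix_mul_assoc)
  moreover have "transpose Z1 *v (M *v e) = 0"
    by (simp add: matrix_vector_mul_assoc matrix_mul_assoc Z1M)
  ultimately have XTMe: "transpose X *v (M *v e) = 0" unfolding X_def hcat_T by simp
  have P_eq: "P = mat 1 - M" unfolding M_eq by simp
  have XTPe: "transpose X *v (P *v e) = 0"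
    unfolding P_eq by (simp add: matrix_vector_mult_diff_rdistrib matrix_vector_mult_diff_distrib XTe XTMe)
  have PVh: "P *v (Vh *v r) = 0"
    unfolding Vh_eq by (simp add: matrix_vector_mul_assoc matrix_mul_assoc PM)
  have ue: "u - e = X *v (th_cf - th_2sls) + Vh *v r"
    unfolding u_def e_def r_def by (simp add: matrix_vector_mult_diff_distrib algebra_simps)
  have "(transpose X ** P ** X) *v (th_cf - th_2sls)
      = transpose X *v (P *v (u - e - Vh *v r))"
    unfolding ue by (simp add: matrix_vector_mul_assoc matrix_mul_assoc)
  also have "\<dots> = 0"
    by (simp add: matrix_vector_mult_diff_distrib N2 XTPe PVh)
  finally have "th_cf - th_2sls = 0" using inv_inj gPX unfolding P_def by blast
  then have thcf: "th_cf = th_2sls" by simp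
  have e_eq: "e = u - Vh *v r" unfolding e_def u_def r_def thcf by simp
  have cross2: "inner e (Vh *v r) = 0"
    using dotT[of Vh e r] VTe by simp
  define C where "C = transpose Vh ** Vh"
  have VrVr: "inner (Vh *v r) (Vh *v r) = inner r (C *v r)"
  proof -
    have "inner r (C *v r) = inner (transpose Vh *v (Vh *v r)) r"
      unfolding C_def by (simp only: matrix_vector_mul_assoc matrix_mul_assoc inner_commute)
    then show ?thesis by (simp only: dotT)
  qed
  have u_eq2: "u = e + Vh *v r" unfolding e_eq by simp
  have E2: "(norm u)\<^sup>2 = (norm e)\<^sup>2 + inner r (C *v r)"
    unfolding power2_norm_eq_inner u_eq2
    by (simp add: inner_add_left inner_add_right cross2 inner_commute[of "Vh *v r" e] VrVr)
  have "C *v r = transpose Vh *v u"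
    unfolding C_def e_eq using VTe unfolding e_eq
    by (simp add: matrix_vector_mul_assoc[symmetric] matrix_vector_mult_diff_distrib)
  also have "\<dots> = transpose Y1 *v u"
    unfolding VhT M_eq
    by (simp add: matrix_vector_mul_assoc[symmetric] matrix_vector_mult_diff_rdistrib
        matrix_vector_mult_diff_distrib Y1Pu)
  also have "\<dots> = B *v d"
    unfolding u_eq B_def
    by (simp add: matrix_vector_right_distrib Y1eo XdM matrix_vector_mul_assoc matrix_mul_assoc)
  finally have Cr: "C *v r = B *v d" .

  define A where "A = transpose (P ** Y1) ** M1 ** (P ** Y1)"
  have gB: "invertible B" unfolding B_def M1_def
    using qinv[OF gZ1] gX gram_inv_iff unfolding X_def by blast
  have PX: "hcat (P ** Y1) Z1 = P ** X" unfolding X_def hcat_mm PZ1 ..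
  have "\<forall>x. hcat (P ** Y1) Z1 *v x = 0 \<longrightarrow> x = 0"
  proof (intro allI impI)
    fix x assume "hcat (P ** Y1) Z1 *v x = 0"
    then have "transpose X *v ((P ** X) *v x) = 0" unfolding PX by simp
    then have "(transpose X ** P ** X) *v x = 0"
      by (simp only: matrix_vector_mul_assoc matrix_mul_assoc)
    then show "x = 0" using inv_inj gPX unfolding P_def by blast
  qed
  then have gA: "invertible A" unfolding A_def M1_def using qinv[OF gZ1] by blast
  have PP1: "P ** P1 = P1"
    unfolding P1_def projm_def by (simp add: matrix_mul_assoc PZ1)
  have P1P: "P1 ** P = P1"
    unfolding P1_def projm_def by (simp add: matrix_mul_assoc[symmetric] Z1P)
  have PM1P: "P ** M1 ** P = P - P1"
    unfolding M1_eq by (simp add: mm_sub_l mm_sub_r PP1 P1P Pidem)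
  have A_eq: "A = transpose Y1 ** (P - P1) ** Y1"
    unfolding A_def PM1P[symmetric] by (simp add: matrix_transpose_mul Psym matrix_mul_assoc)
  have C_eq: "C = transpose Y1 ** M ** Y1"
  proof -
    have "C = transpose Y1 ** M ** (M ** Y1)" unfolding C_def VhT unfolding Vh_eq ..
    also have "\<dots> = transpose Y1 ** (M ** M) ** Y1" by (simp only: matrix_mul_assoc)
    finally show ?thesis by (simp only: Midem)
  qed
  have CBA: "C = B - A"
  proof -
    have "B - A = transpose Y1 ** (M1 - (P - P1)) ** Y1"
      unfolding B_def A_eq by (simp add: mm_sub_l mm_sub_r)
    also have "M1 - (P - P1) = M" unfolding M1_eq M_eq by simp
    finally show ?thesis unfolding C_eq by simp
  qed
  define Ai where "Ai = matrix_inv A"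
  define Bi where "Bi = matrix_inv B"
  define D where "D = Ai - Bi"
  have tHmat_eq: "tHmat Y1 Z1 Z s s = s *\<^sub>R D" for s
    unfolding tHmat_def Let_def D_def Ai_def Bi_def A_def B_def P_def M1_def
    by (simp add: scaleR_diff_right)
  have sD: "invertible (s *\<^sub>R D)" if "s > 0" "invertible (tHmat Y1 Z1 Z s s)" for s
    using that tHmat_eq by simp
  have gD: "invertible D"
  proof -
    have h1: "invertible (s2ols *\<^sub>R D)"
      using sD[OF \<open>s2ols > 0\<close> \<open>invertible (tHmat Y1 Z1 Z s2ols s2ols)\<close>] .
    have "invertible ((1/s2ols) *\<^sub>R (s2ols *\<^sub>R D))"
      by (rule scalar_invertible[OF _ h1]) (use \<open>s2ols > 0\<close> in simp)
    moreover have "(1/s2ols) *\<^sub>R (s2ols *\<^sub>R D) = D" using \<open>s2ols > 0\<close> by simp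
    ultimately show ?thesis by metis
  qed
  have D_eq: "D = Ai ** C ** Bi"
    unfolding CBA D_def Ai_def Bi_def
    by (simp add: mm_sub_l mm_sub_r minv[OF gA] minv[OF gB] matrix_mul_assoc[symmetric])
  have C_eq2: "C = A ** D ** B"
    unfolding D_eq Ai_def Bi_def
    by (simp add: matrix_mul_assoc[symmetric]) (simp add: matrix_mul_assoc minv[OF gA] minv[OF gB])
  have gC: "invertible C" unfolding C_eq2 using gA gD gB by (simp add: invertible_mult)
  define Ci where "Ci = matrix_inv C"
  define K where "K = B ** Ci ** A"
  have KD: "K ** D = mat 1"
    unfolding K_def D_eq Ai_def Bi_def Ci_def
    by (simp add: matrix_mul_assoc[symmetric]) (simp add: matrix_mul_assoc minv[OF gA] minv[OF gB] minv[OF gC])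
  have invsD: "matrix_inv (s *\<^sub>R D) = (1/s) *\<^sub>R K" if "s > 0" for s
  proof (rule minv_unique)
    show "invertible (s *\<^sub>R D)" using gD that by (intro scalar_invertible) auto
    show "((1/s) *\<^sub>R K) ** (s *\<^sub>R D) = mat 1"
      using that KD by (simp add: matrix_scalar_ac)
  qed
  have tHn_eq: "tHn Y1 Z1 Z b_ols b_2sls s s = inner d (K *v d) / s" if "s > 0" for s
  proof -
    have "tHn Y1 Z1 Z b_ols b_2sls s s = inner d (matrix_inv (s *\<^sub>R D) *v d)"
      unfolding tHn_def Let_def D_def Ai_def Bi_def A_def B_def P_def M1_def d_def
      by (simp add: scaleR_diff_right)
    also have "\<dots> = inner d (K *v d) / s"
      using that by (simp add: invsD scaleR_matrix_vector_assoc[symmetric] divide_inverse mult.commute)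
    finally show ?thesis .
  qed
  have r_eq: "r = Ci *v (B *v d)"
    unfolding Cr[symmetric] Ci_def by (simp add: matrix_vector_mul_assoc matrix_mul_assoc minv[OF gC])
  have BCB: "B ** Ci ** B = K + B"
  proof -
    have "B ** Ci ** B = B ** Ci ** (A + C)" unfolding CBA by simp
    also have "\<dots> = K + B"
      unfolding K_def by (simp add: matrix_add_ldistrib matrix_mul_assoc[symmetric] Ci_def minv[OF gC])
    finally show ?thesis .
  qed
  have key: "inner r (C *v r) = inner d (K *v d) + inner d (B *v d)"
  proof -
    have "inner r (C *v r) = inner (B *v d) (Ci *v (B *v d))"
      unfolding Cr by (simp add: r_eq inner_commute)
    also have "\<dots> = inner d (B *v (Ci *v (B *v d)))"
      using dotT[of B d "Ci *v (B *v d)"] Bsym by simp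
    also have "\<dots> = inner d ((K + B) *v d)"
      unfolding BCB[symmetric] by (simp add: matrix_vector_mul_assoc matrix_mul_assoc)
    finally show ?thesis by (simp add: matrix_vector_mult_add_rdistrib inner_add_right)
  qed
  define N where "N = real CARD('n)"
  have Npos: "N > 0" unfolding N_def by simp
  have s2u_eq: "s2u = (norm e)\<^sup>2 / N" unfolding s2u_def e_def N_def ..
  have s2ols_eq: "s2ols = (norm eo)\<^sup>2 / N" unfolding s2ols_def eo_def N_def ..
  have s2tsls_eq: "s2tsls = (norm u)\<^sup>2 / N" unfolding s2tsls_def u_def N_def ..
  have tH1_eq: "tH1 = inner d (K *v d) / s2ols"
    unfolding tH1_def using tHn_eq \<open>s2ols > 0\<close> by blast
  have tH2_eq: "tH2 = inner d (K *v d) / s2tsls"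
    unfolding tH2_def using tHn_eq \<open>s2tsls > 0\<close> by blast
  have Hn_eq: "Hn = inner d (B *v d) / (N * s2tsls)"
    unfolding Hn_def d_def[symmetric] B_def M1_def N_def ..
  show ?thesis
    unfolding N_def[symmetric] tH1_eq tH2_eq Hn_eq
    by (rule final_alg[OF Npos \<open>s2ols > 0\<close> \<open>s2tsls > 0\<close> s2u_eq s2ols_eq s2tsls_eq E1])
      (use E1 E2 key in simp)
qed

end
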